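(* For $n \ge 3$ let $Pi_n$ be the graph with vertex set $\{1,\dots,n\}$ in which distinct $i,j$ are adjacent if and only if $(i-j) \bmod n \in \{0,1,\dots,\lfloor n/4\rfloor\}$ or $(j-i) \bmod n \in \{0,1,\dots,\lfloor n/4\rfloor\}$. Then \[ \lim_{n\to\infty}\frac{\lambda_3(Pi_n)}{n} = \frac{1}{\pi}. \]
   Context: $\lambda_3$ denotes the third largest eigenvalue (with multiplicity) of the adjacency matrix. *)

theory Defs
  imports Complex_Main "Jordan_Normal_Form.Char_Poly" "HOL-Library.Multiset"
begin

text \<open>The graph Pi_n on vertices 1..n; matrix index i (0 \<le> i < n) stands for vertex i+1
  (differences, hence adjacency, are unaffected by this shift).\<close>
definition pi_adj :: "nat \<Rightarrow> int \<Rightarrow> int \<Rightarrow> bool" where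
  "pi_adj n i j \<longleftrightarrow> i \<noteq> j \<and>
     ((i - j) mod int n \<in> {0..int n div 4} \<or> (j - i) mod int n \<in> {0..int n div 4})"

definition pi_adj_matrix :: "nat \<Rightarrow> real mat" where
  "pi_adj_matrix n = mat n n (\<lambda>(i, j). if pi_adj n (int i + 1) (int j + 1) then 1 else 0)"

text \<open>Multiset of eigenvalues (with algebraic multiplicity): the roots of the characteristic
  polynomial, which splits over the reals for a real symmetric matrix.\<close>
definition eigenvalues_mset :: "real mat \<Rightarrow> real multiset" where
  "eigenvalues_mset A = (THE M. char_poly A = (\<Prod>a\<in>#M. [:- a, 1:]))"

definition kth_largest_eigenvalue :: "nat \<Rightarrow> real mat \<Rightarrow> real" where
  "kth_largest_eigenvalue k A = rev (sorted_list_of_multiset (eigenvalues_mset A)) ! (k - 1)"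

end

theory Submission
  imports Defs "HOL-Real_Asymp.Real_Asymp"
begin

lemma prod_lin_inj:
  fixes M N :: "real multiset"
  assumes "(\<Prod>a\<in>#M. [:- a, 1:]) = (\<Prod>a\<in>#N. [:- a, 1:])"
  shows "M = N"
  using assms
proof (induction M arbitrary: N)
  case empty
  show ?case
  proof (rule ccontr)
    assume "{#} \<noteq> N"
    then obtain b where "b \<in># N" by (metis multiset_nonemptyE)
    hence "poly (\<Prod>a\<in>#N. [:- a, 1:]) b = 0"
      by (auto simp: poly_prod_mset prod_mset_zero_iff)
    with empty show False by simp
  qed
next
  case (add x M)
  have "poly (\<Prod>a\<in>#add_mset x M. [:- a, 1:]) x = 0" by (simp add: poly_prod_mset)
  moreover have "poly (\<Prod>a\<in>#N. [:- a, 1:]) x = poly (\<Prod>a\<in>#add_mset x M. [:- a, 1:]) x"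
    using add.prems by (simp only:)
  ultimately have "poly (\<Prod>a\<in>#N. [:- a, 1:]) x = 0" by simp
  hence xN: "x \<in># N" by (auto simp: poly_prod_mset prod_mset_zero_iff)
  hence N: "N = add_mset x (N - {#x#})" by simp
  have "[:- x, 1:] * (\<Prod>a\<in>#M. [:- a, 1:]) = [:- x, 1:] * (\<Prod>a\<in>#(N - {#x#}). [:- a, 1:])"
    using add.prems by (subst (asm) N) simp
  hence "(\<Prod>a\<in>#M. [:- a, 1:]) = (\<Prod>a\<in>#(N - {#x#}). [:- a, 1:])"
    by (subst (asm) mult_left_cancel) auto
  from add.IH[OF this] show ?case using N by simp
qed

lemma third_lower:
  fixes f :: "nat \<Rightarrow> real"
  assumes "a < n" "b < n" "c < n" "a \<noteq> b" "a \<noteq> c" "b \<noteq> c"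
    "f a \<ge> x" "f b \<ge> x" "f c \<ge> x"
  shows "rev (sorted_list_of_multiset (mset (map f [0..<n]))) ! 2 \<ge> x"
proof (rule ccontr)
  define S where "S = sorted_list_of_multiset (mset (map f [0..<n]))"
  define L where "L = rev S"
  assume "\<not> ?thesis"
  hence L2: "L ! 2 < x" unfolding L_def S_def by simp
  have mS: "mset S = mset (map f [0..<n])" unfolding S_def by simp
  have lenS: "length S = n" using mS by (metis length_map length_upt minus_nat.diff_0 size_mset)
  have sS: "sorted S" unfolding S_def by simp
  have lenL: "length L = n" using lenS L_def by simp
  have "length (filter (\<lambda>v. x \<le> v) L) = length (filter (\<lambda>v. x \<le> v) (map f [0..<n]))"
  proof -
    have "mset L = mset (map f [0..<n])" using mS L_def by simp
    hence "mset (filter (\<lambda>v. x \<le> v) L) = mset (filter (\<lambda>v. x \<le> v) (map f [0..<n]))" by simp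
    thus ?thesis by (metis size_mset)
  qed
  also have "\<dots> = card {i. i < n \<and> x \<le> f i}"
    by (simp add: length_filter_map distinct_length_filter, intro arg_cong[where f=card]) auto
  finally have eq: "card {i. i < length L \<and> x \<le> L ! i} = card {i. i < n \<and> x \<le> f i}"
    by (simp add: length_filter_conv_card)
  have "{a,b,c} \<subseteq> {i. i < n \<and> x \<le> f i}" using assms by auto
  hence "card {a,b,c} \<le> card {i. i < n \<and> x \<le> f i}" by (intro card_mono) auto
  hence ge3: "3 \<le> card {i. i < length L \<and> x \<le> L ! i}" using assms eq by simp
  have "{i. i < length L \<and> x \<le> L ! i} \<subseteq> {0,1}"
  proof
    fix i assume i: "i \<in> {i. i < length L \<and> x \<le> L ! i}"
    show "i \<in> {0,1}"
    proof (rule ccontr)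
      assume "i \<notin> {0,1}"
      hence "2 \<le> i" by auto
      have "L ! i = S ! (n - 1 - i)" using i lenS L_def by (simp add: rev_nth)
      moreover have "L ! 2 = S ! (n - 3)" using i lenS L_def \<open>2 \<le> i\<close> by (simp add: rev_nth)
      moreover have "S ! (n - 1 - i) \<le> S ! (n - 3)"
        using sS \<open>2 \<le> i\<close> i lenL lenS by (intro sorted_nth_mono) auto
      ultimately show False using i L2 by auto
    qed
  qed
  hence "card {i. i < length L \<and> x \<le> L ! i} \<le> card {0::nat,1}" by (intro card_mono) auto
  thus False using ge3 by simp
qed

lemma third_upper:
  fixes f :: "nat \<Rightarrow> real"
  assumes "3 \<le> n" "\<And>i. i < n \<Longrightarrow> i \<noteq> p \<Longrightarrow> i \<noteq> q \<Longrightarrow> f i \<le> y"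
  shows "rev (sorted_list_of_multiset (mset (map f [0..<n]))) ! 2 \<le> y"
proof (rule ccontr)
  define S where "S = sorted_list_of_multiset (mset (map f [0..<n]))"
  define L where "L = rev S"
  assume "\<not> ?thesis"
  hence L2: "L ! 2 > y" unfolding L_def S_def by simp
  have mS: "mset S = mset (map f [0..<n])" unfolding S_def by simp
  have lenS: "length S = n" using mS by (metis length_map length_upt minus_nat.diff_0 size_mset)
  have sS: "sorted S" unfolding S_def by simp
  have lenL: "length L = n" using lenS L_def by simp
  have "length (filter (\<lambda>v. y < v) L) = length (filter (\<lambda>v. y < v) (map f [0..<n]))"
  proof -
    have "mset L = mset (map f [0..<n])" using mS L_def by simp
    hence "mset (filter (\<lambda>v. y < v) L) = mset (filter (\<lambda>v. y < v) (map f [0..<n]))" by simp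
    thus ?thesis by (metis size_mset)
  qed
  also have "\<dots> = card {i. i < n \<and> y < f i}"
    by (simp add: length_filter_map distinct_length_filter, intro arg_cong[where f=card]) auto
  finally have eq: "card {i. i < length L \<and> y < L ! i} = card {i. i < n \<and> y < f i}"
    by (simp add: length_filter_conv_card)
  have "{i. i < n \<and> y < f i} \<subseteq> {p,q}" using assms(2) by force
  hence "card {i. i < n \<and> y < f i} \<le> card {p,q}" by (intro card_mono) auto
  moreover have "card {p,q} \<le> 2" by (cases "p = q") auto
  ultimately have le2: "card {i. i < n \<and> y < f i} \<le> 2" by linarith
  have "L ! 0 \<ge> L ! 2"
    using sS lenS L_def assms(1) by (simp add: rev_nth sorted_nth_mono)
  moreover have "L ! 1 \<ge> L ! 2"
    using sS lenS L_def assms(1) by (simp add: rev_nth sorted_nth_mono)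
  ultimately have "{0,1,2} \<subseteq> {i. i < length L \<and> y < L ! i}" using L2 lenL assms(1) by auto
  hence "card {0::nat,1,2} \<le> card {i. i < length L \<and> y < L ! i}" by (intro card_mono) auto
  thus False using eq le2 by simp
qed

definition ee :: "nat \<Rightarrow> real \<Rightarrow> complex" where "ee n x = cis (2 * pi * x / real n)"
definition cc :: "nat \<Rightarrow> nat \<Rightarrow> bool" where
  "cc n d \<longleftrightarrow> (1 \<le> d \<and> d \<le> n div 4) \<or> (n - n div 4 \<le> d \<and> d < n)"
definition dd :: "nat \<Rightarrow> nat \<Rightarrow> nat \<Rightarrow> nat" where
  "dd n i j = (if i \<le> j then j - i else j + n - i)"
definition mu :: "nat \<Rightarrow> nat \<Rightarrow> real" where
  "mu n m = (\<Sum>t=1..n div 4. 2 * cos (2 * real t * (pi * real m / real n)))"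

lemma adj_cc:
  assumes "4 \<le> n" "i < n" "j < n"
  shows "pi_adj n (int i + 1) (int j + 1) \<longleftrightarrow> cc n (dd n i j)"
proof -
  have k: "int n div 4 = int (n div 4)" by simp
  have m1: "(int i + 1 - (int j + 1)) mod int n = (if j \<le> i then int i - int j else int i - int j + int n)"
  proof (cases "j \<le> i")
    case True thus ?thesis using assms by (simp add: mod_pos_pos_trivial)
  next
    case False
    have "(int i - int j) mod int n = (int i - int j + int n) mod int n" by simp
    also have "\<dots> = int i - int j + int n" using assms False by (intro mod_pos_pos_trivial) auto
    finally show ?thesis using False by simp
  qed
  have m2: "(int j + 1 - (int i + 1)) mod int n = (if i \<le> j then int j - int i else int j - int i + int n)"
  proof (cases "i \<le> j")
    case True thus ?thesis using assms by (simp add: mod_pos_pos_trivial)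
  next
    case False
    have "(int j - int i) mod int n = (int j - int i + int n) mod int n" by simp
    also have "\<dots> = int j - int i + int n" using assms False by (intro mod_pos_pos_trivial) auto
    finally show ?thesis using False by simp
  qed
  have kb: "1 \<le> n div 4" "4 * (n div 4) \<le> n" using assms by auto
  show ?thesis unfolding pi_adj_def m1 m2 k cc_def dd_def using assms kb
    by (auto split: if_splits)
qed

lemma ee_add: "ee n (x + y) = ee n x * ee n y"
  by (simp add: ee_def cis_mult add_divide_distrib ring_distribs)

lemma ee_int: assumes "n > 0" shows "ee n (real n * of_int q) = 1"
proof -
  have "2 * pi * (real n * of_int q) / real n = 2 * pi * of_int q" using assms by simp
  thus ?thesis unfolding ee_def by (simp add: cis_multiple_2pi)
qed

lemma ee_nat: assumes "n > 0" shows "ee n (real n * real q) = 1"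
  using ee_int[OF assms, of "int q"] by simp

lemma ee_pow: "ee n x ^ l = ee n (real l * x)"
  by (simp add: ee_def DeMoivre mult_ac)

lemma ee_neg: "ee n (- x) = cnj (ee n x)"
  by (simp add: ee_def cis_cnj)

lemma ee_cos: "ee n x + ee n (- x) = complex_of_real (2 * cos (2 * pi * x / real n))"
  by (simp add: ee_def complex_eq_iff cis.sel)

lemma ee_ne1:
  fixes d :: int
  assumes "n > 0" "d \<noteq> 0" "\<bar>d\<bar> < int n"
  shows "ee n (of_int d) \<noteq> 1"
proof
  assume "ee n (of_int d) = 1"
  hence "cos (2 * pi * of_int d / real n) = 1" unfolding ee_def
    by (metis Re_complex_of_real cis.sel(1) one_complex.sel(1))
  then obtain q :: int where q: "2 * pi * of_int d / real n = of_int q * 2 * pi"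
    by (auto simp: cos_one_2pi_int)
  hence "of_int d = of_int q * real n" using assms(1) by (simp add: field_simps)
  hence dq: "d = q * int n" by (metis of_int_eq_iff of_int_mult of_int_of_nat_eq)
  show False
  proof (cases "q = 0")
    case True thus False using dq assms by simp
  next
    case False
    have "1 * int n \<le> \<bar>q\<bar> * int n" by (rule mult_right_mono) (use False in auto)
    hence "\<bar>q * int n\<bar> \<ge> int n" by (simp add: abs_mult)
    thus False using dq assms by simp
  qed
qed

lemma sum_ee:
  assumes "n > 0" "i < n" "j < n"
  shows "(\<Sum>l<n. ee n (real l * (real i - real j))) = (if i = j then of_nat n else 0)"
proof (cases "i = j")
  case True thus ?thesis by (simp add: ee_def)
next
  case False
  define z where "z = ee n (of_int (int i - int j))"
  have z1: "z \<noteq> 1" unfolding z_def using assms False by (intro ee_ne1) auto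
  have zn: "z ^ n = 1" unfolding z_def ee_pow
    using ee_int[OF assms(1), of "int i - int j"] by simp
  have "(\<Sum>l<n. ee n (real l * (real i - real j))) = (\<Sum>l<n. z ^ l)"
    unfolding z_def ee_pow by simp
  also have "\<dots> = 0" using z1 zn by (simp add: geometric_sum)
  finally show ?thesis using False by simp
qed

lemma lam:
  assumes "4 \<le> n"
  shows "(\<Sum>d<n. if cc n d then ee n (real d * real m) else 0) = complex_of_real (mu n m)"
proof -
  define k where "k = n div 4"
  have kb: "1 \<le> k" "4 * k \<le> n" using assms unfolding k_def by auto
  have set: "{d \<in> {..<n}. cc n d} = {1..k} \<union> {n-k..<n}"
    unfolding cc_def k_def[symmetric] using kb by auto
  have "(\<Sum>d<n. if cc n d then ee n (real d * real m) else 0) = (\<Sum>d\<in>{d \<in> {..<n}. cc n d}. ee n (real d * real m))"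
    by (rule sym, rule sum.inter_filter) simp
  also have "\<dots> = (\<Sum>d\<in>{1..k}. ee n (real d * real m)) + (\<Sum>d\<in>{n-k..<n}. ee n (real d * real m))"
    unfolding set using kb by (intro sum.union_disjoint) auto
  also have "(\<Sum>d\<in>{n-k..<n}. ee n (real d * real m)) = (\<Sum>t\<in>{1..k}. ee n (- (real t * real m)))"
  proof (rule sum.reindex_bij_witness[where j = "\<lambda>t. n - t" and i = "\<lambda>d. n - d"])
    fix d assume d: "d \<in> {n-k..<n}"
    have "ee n (- (real (n - d) * real m)) = ee n (real d * real m + real n * of_int (- int m))"
      using d kb by (simp add: of_nat_diff algebra_simps)
    also have "\<dots> = ee n (real d * real m) * ee n (real n * of_int (- int m))" by (rule ee_add)
    also have "ee n (real n * of_int (- int m)) = 1" using assms by (intro ee_int) auto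
    finally show "ee n (- (real (n - d) * real m)) = ee n (real d * real m)" by simp
  qed (use kb in auto)
  also have "(\<Sum>d\<in>{1..k}. ee n (real d * real m)) + (\<Sum>t\<in>{1..k}. ee n (- (real t * real m)))
      = (\<Sum>t\<in>{1..k}. complex_of_real (2 * cos (2 * real t * (pi * real m / real n))))"
    unfolding sum.distrib[symmetric] ee_cos by (intro sum.cong refl arg_cong[where f = complex_of_real]) (simp add: mult_ac)
  also have "\<dots> = complex_of_real (mu n m)" unfolding mu_def k_def by simp
  finally show ?thesis .
qed

lemma circ:
  assumes "4 \<le> n" "i < n"
  shows "(\<Sum>j<n. if cc n (dd n i j) then ee n (real j * real m) else 0) = ee n (real i * real m) * complex_of_real (mu n m)"
proof -
  define ww where "ww d = (if i + d < n then i + d else i + d - n)" for d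
  have "(\<Sum>j<n. if cc n (dd n i j) then ee n (real j * real m) else 0)
      = (\<Sum>d<n. if cc n d then ee n (real i * real m) * ee n (real d * real m) else 0)"
  proof (rule sym, rule sum.reindex_bij_witness[where j = ww and i = "dd n i"])
    fix d assume d: "d \<in> {..<n}"
    have dd: "dd n i (ww d) = d" using d assms unfolding ww_def dd_def by auto
    have "ee n (real (ww d) * real m) = ee n (real i * real m) * ee n (real d * real m)"
    proof (cases "i + d < n")
      case True thus ?thesis unfolding ww_def by (simp add: ee_add[symmetric] algebra_simps)
    next
      case False
      hence "real (ww d) * real m = (real i * real m + real d * real m) + real n * of_int (- int m)"
        unfolding ww_def by (simp add: of_nat_diff algebra_simps)
      hence "ee n (real (ww d) * real m) = ee n (real i * real m + real d * real m) * ee n (real n * of_int (- int m))"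
        by (simp only: ee_add)
      also have "ee n (real n * of_int (- int m)) = 1" using assms by (intro ee_int) auto
      finally show ?thesis by (simp add: ee_add)
    qed
    thus "(if cc n (dd n i (ww d)) then ee n (real (ww d) * real m) else 0) =
          (if cc n d then ee n (real i * real m) * ee n (real d * real m) else 0)" using dd by simp
  qed (use assms in \<open>auto simp: ww_def dd_def\<close>)
  also have "\<dots> = ee n (real i * real m) * (\<Sum>d<n. if cc n d then ee n (real d * real m) else 0)"
    by (simp add: sum_distrib_left if_distrib cong: if_cong)
  also have "\<dots> = ee n (real i * real m) * complex_of_real (mu n m)" using lam[OF assms(1)] by simp
  finally show ?thesis .
qed

lemma eig:
  assumes n4: "4 \<le> n"
  shows "eigenvalues_mset (pi_adj_matrix n) = mset (map (mu n) [0..<n])"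
proof -
  have n0: "n > 0" using n4 by simp
  define A where "A = pi_adj_matrix n"
  define AC where "AC = map_mat complex_of_real A"
  define F where "F = mat n n (\<lambda>(i,j). ee n (real i * real j))"
  define Q where "Q = mat n n (\<lambda>(i,j). ee n (- (real i * real j)) / of_nat n)"
  define D where "D = mat n n (\<lambda>(i,j). if i = j then complex_of_real (mu n i) else 0)"
  have A: "A \<in> carrier_mat n n" unfolding A_def pi_adj_matrix_def by simp
  have AC: "AC \<in> carrier_mat n n" unfolding AC_def using A by simp
  have F: "F \<in> carrier_mat n n" and Q: "Q \<in> carrier_mat n n" and D: "D \<in> carrier_mat n n"
    unfolding F_def Q_def D_def by auto
  have FQ: "F * Q = 1\<^sub>m n"
  proof (rule eq_matI)
    fix i j assume ij: "i < dim_row (1\<^sub>m n :: complex mat)" "j < dim_col (1\<^sub>m n :: complex mat)"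
    have "(F * Q) $$ (i, j) = (\<Sum>l<n. ee n (real i * real l) * (ee n (- (real l * real j)) / of_nat n))"
      using ij unfolding F_def Q_def by (simp add: scalar_prod_def lessThan_atLeast0)
    also have "\<dots> = (\<Sum>l<n. ee n (real l * (real i - real j))) / of_nat n"
      by (simp add: sum_divide_distrib ee_add[symmetric] algebra_simps)
    also have "\<dots> = 1\<^sub>m n $$ (i, j)" using ij n0 by (simp add: sum_ee)
    finally show "(F * Q) $$ (i, j) = 1\<^sub>m n $$ (i, j)" .
  qed (use F Q in auto)
  have QF: "Q * F = 1\<^sub>m n"
  proof (rule eq_matI)
    fix i j assume ij: "i < dim_row (1\<^sub>m n :: complex mat)" "j < dim_col (1\<^sub>m n :: complex mat)"
    have "(Q * F) $$ (i, j) = (\<Sum>l<n. (ee n (- (real i * real l)) / of_nat n) * ee n (real l * real j))"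
      using ij unfolding F_def Q_def by (simp add: scalar_prod_def lessThan_atLeast0)
    also have "\<dots> = (\<Sum>l<n. ee n (real l * (real j - real i))) / of_nat n"
      by (simp add: sum_divide_distrib ee_add[symmetric] algebra_simps)
    also have "\<dots> = 1\<^sub>m n $$ (i, j)" using ij n0 by (simp add: sum_ee)
    finally show "(Q * F) $$ (i, j) = 1\<^sub>m n $$ (i, j)" .
  qed (use F Q in auto)
  have AF: "AC * F = F * D"
  proof (rule eq_matI)
    fix i m assume im: "i < dim_row (F * D)" "m < dim_col (F * D)"
    hence i: "i < n" and m: "m < n" using F D by auto
    have "(AC * F) $$ (i, m) = (\<Sum>j<n. complex_of_real (if pi_adj n (int i + 1) (int j + 1) then 1 else 0) * ee n (real j * real m))"
      using i m unfolding AC_def A_def F_def pi_adj_matrix_def by (simp add: scalar_prod_def lessThan_atLeast0)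
    also have "\<dots> = (\<Sum>j<n. if cc n (dd n i j) then ee n (real j * real m) else 0)"
      using i n4 by (intro sum.cong refl) (simp add: adj_cc)
    also have "\<dots> = ee n (real i * real m) * complex_of_real (mu n m)" using circ[OF n4 i] .
    also have "\<dots> = (F * D) $$ (i, m)"
    proof -
      have "(F * D) $$ (i, m) = (\<Sum>l<n. ee n (real i * real l) * (if l = m then complex_of_real (mu n l) else 0))"
        using i m unfolding F_def D_def by (simp add: scalar_prod_def lessThan_atLeast0)
      also have "\<dots> = ee n (real i * real m) * complex_of_real (mu n m)"
        using m by (simp add: if_distrib cong: if_cong)
      finally show ?thesis by simp
    qed
    finally show "(AC * F) $$ (i, m) = (F * D) $$ (i, m)" .
  qed (use AC F D in auto)
  have ACeq: "AC = F * D * Q"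
  proof -
    have "AC = AC * (F * Q)" using AC FQ by simp
    also have "\<dots> = (AC * F) * Q" using AC F Q by (simp add: assoc_mult_mat)
    finally show ?thesis using AF by simp
  qed
  have sim: "similar_mat AC D"
    unfolding similar_mat_def similar_mat_wit_def Let_def
    using AC F Q D FQ QF ACeq by (intro exI[of _ F] exI[of _ Q]) auto
  have ut: "upper_triangular D" unfolding D_def by (auto simp: upper_triangular_def)
  have "char_poly AC = char_poly D" by (rule char_poly_similar[OF sim])
  also have "\<dots> = (\<Prod>a\<leftarrow>diag_mat D. [:- a, 1:])" by (rule char_poly_upper_triangular[OF D ut])
  also have "diag_mat D = map (\<lambda>i. complex_of_real (mu n i)) [0..<n]"
    unfolding D_def diag_mat_def by (intro nth_equalityI) auto
  finally have cpC: "char_poly AC = (\<Prod>i\<leftarrow>[0..<n]. [:- complex_of_real (mu n i), 1:])"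
    by (simp add: o_def)
  interpret R: map_poly_inj_idom_hom "of_real :: real \<Rightarrow> complex" ..
  have "map_poly of_real (char_poly A) = char_poly AC"
    unfolding AC_def by (rule of_real_hom.char_poly_hom[OF A, symmetric])
  also have "\<dots> = map_poly of_real (\<Prod>i\<leftarrow>[0..<n]. [:- mu n i, 1:])"
    unfolding cpC R.hom_prod_list by (simp add: o_def)
  finally have cp: "char_poly A = (\<Prod>i\<leftarrow>[0..<n]. [:- mu n i, 1:])" by simp
  have "char_poly A = (\<Prod>a\<in># mset (map (mu n) [0..<n]). [:- a, 1:])"
    unfolding cp by (simp add: prod_mset_prod_list o_def flip: mset_map)
  thus ?thesis unfolding eigenvalues_mset_def A_def
    by (intro the_equality) (auto intro: prod_lin_inj)
qed

lemma tel: "sin x * (\<Sum>t=1..k. 2 * cos (2 * real t * x)) = sin ((2 * real k + 1) * x) - sin x"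
proof (induction k)
  case 0 thus ?case by simp
next
  case (Suc k)
  have e: "sin ((2 * real k + 3) * x) - sin ((2 * real k + 1) * x) = sin x * (2 * cos (2 * real (Suc k) * x))"
  proof -
    have "sin ((2 * real k + 3) * x) = sin (2 * real (Suc k) * x + x)" by (simp add: algebra_simps)
    moreover have "sin ((2 * real k + 1) * x) = sin (2 * real (Suc k) * x - x)" by (simp add: algebra_simps)
    ultimately show ?thesis by (simp only: sin_add sin_diff) (simp add: algebra_simps)
  qed
  have "sin x * (\<Sum>t=1..Suc k. 2 * cos (2 * real t * x)) = sin x * (\<Sum>t=1..k. 2 * cos (2 * real t * x)) + sin x * (2 * cos (2 * real (Suc k) * x))"
    by (simp add: distrib_left)
  also have "\<dots> = sin ((2 * real k + 3) * x) - sin x" using Suc e by simp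
  finally show ?case by (simp add: algebra_simps)
qed

lemma mu_closed:
  assumes "0 < m" "m < n"
  shows "mu n m = sin ((2 * real (n div 4) + 1) * (pi * real m / real n)) / sin (pi * real m / real n) - 1"
    and "sin (pi * real m / real n) > 0"
proof -
  show s: "sin (pi * real m / real n) > 0" using assms by (intro sin_gt_zero) (auto simp: field_simps)
  show "mu n m = sin ((2 * real (n div 4) + 1) * (pi * real m / real n)) / sin (pi * real m / real n) - 1"
    using tel[of "pi * real m / real n" "n div 4"] s unfolding mu_def by (simp add: field_simps)
qed

lemma mu_0_ge: "mu n 1 \<le> mu n 0"
  unfolding mu_def by (intro sum_mono) simp

lemma mu_sym:
  assumes "0 < n" shows "mu n (n - 1) = mu n 1"
  unfolding mu_def
proof (intro sum.cong refl)
  fix t assume "t \<in> {1..n div 4}"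
  have "2 * real t * (pi * real (n - 1) / real n) = 2 * pi * real_of_int (int t) - 2 * real t * (pi * real 1 / real n)"
    using assms by (simp add: of_nat_diff field_simps)
  moreover have "sin (2 * pi * real_of_int (int t)) = 0"
    by (rule sin_int_2pin)
  ultimately show "2 * cos (2 * real t * (pi * real (n - 1) / real n)) = 2 * cos (2 * real t * (pi * real 1 / real n))"
    by (simp only: cos_diff cos_int_2pin) simp
qed

lemma mu_mid:
  assumes "4 \<le> n" "2 \<le> m" "m + 2 \<le> n"
  shows "mu n m \<le> 1 / sin (2 * pi / real n)"
proof -
  have c: "mu n m = sin ((2 * real (n div 4) + 1) * (pi * real m / real n)) / sin (pi * real m / real n) - 1"
    and s: "sin (pi * real m / real n) > 0" using mu_closed[of m n] assms by auto
  have s2: "sin (2 * pi / real n) > 0" using assms by (intro sin_gt_zero) (auto simp: field_simps)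
  have le: "sin (2 * pi / real n) \<le> sin (pi * real m / real n)"
  proof (cases "2 * m \<le> n")
    case True
    have "0 \<le> 2 * pi / real n" by simp
    hence h1: "- (pi / 2) \<le> 2 * pi / real n" using pi_gt_zero by linarith
    show ?thesis using assms True by (intro sin_monotone_2pi_le[OF h1]) (auto simp: field_simps)
  next
    case False
    have "sin (pi * real m / real n) = sin (pi - pi * real m / real n)" by simp
    also have "pi - pi * real m / real n = pi * real (n - m) / real n" using assms by (simp add: of_nat_diff field_simps)
    finally have eq: "sin (pi * real m / real n) = sin (pi * real (n - m) / real n)" .
    have "0 \<le> 2 * pi / real n" by simp
    hence h1: "- (pi / 2) \<le> 2 * pi / real n" using pi_gt_zero by linarith
    have nm: "real (n - m) \<ge> 2" "2 * real (n - m) \<le> real n" using assms False by linarith+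
    have h2: "2 * pi / real n \<le> pi * real (n - m) / real n"
      using nm pi_gt_zero by (intro divide_right_mono) auto
    have h3: "pi * real (n - m) / real n \<le> pi / 2" using nm pi_gt_zero assms
      by (simp add: field_simps)
    show ?thesis unfolding eq by (rule sin_monotone_2pi_le[OF h1 h2 h3])
  qed
  have "sin ((2 * real (n div 4) + 1) * (pi * real m / real n)) / sin (pi * real m / real n) \<le> 1 / sin (pi * real m / real n)"
    using s by (intro divide_right_mono) auto
  hence "mu n m \<le> 1 / sin (pi * real m / real n)" unfolding c by linarith
  also have "\<dots> \<le> 1 / sin (2 * pi / real n)" using le s2 by (intro divide_left_mono) auto
  finally show ?thesis .
qed

lemma mu_1_bounds:
  assumes "4 \<le> n"
  shows "cos (pi / real n) / sin (pi / real n) - 1 \<le> mu n 1" "mu n 1 \<le> 1 / sin (pi / real n) - 1"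
proof -
  have c: "mu n 1 = sin ((2 * real (n div 4) + 1) * (pi / real n)) / sin (pi / real n) - 1"
    and s: "sin (pi / real n) > 0" using mu_closed[of 1 n] assms by auto
  show "mu n 1 \<le> 1 / sin (pi / real n) - 1" unfolding c using s by (simp add: divide_right_mono)
  define \<delta> where "\<delta> = (2 * real (n div 4) + 1) * (pi / real n) - pi / 2"
  have kb: "4 * (n div 4) \<le> n" "n \<le> 4 * (n div 4) + 3" by auto
  hence kb': "4 * real (n div 4) \<le> real n" "real n \<le> 4 * real (n div 4) + 3" by linarith+
  have n0: "real n > 0" using assms by simp
  have de: "\<delta> = pi * ((4 * real (n div 4) + 2 - real n) / (2 * real n))" unfolding \<delta>_def using n0
    by (simp add: field_simps)
  have "(4 * real (n div 4) + 2 - real n) / (2 * real n) \<le> 1 / real n" using n0 kb'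
    by (simp add: field_simps)
  hence "pi * ((4 * real (n div 4) + 2 - real n) / (2 * real n)) \<le> pi * (1 / real n)"
    by (rule mult_left_mono) (use pi_gt_zero in linarith)
  hence d1: "\<delta> \<le> pi / real n" unfolding de by simp
  have "- (1 / real n) \<le> (4 * real (n div 4) + 2 - real n) / (2 * real n)" using n0 kb'
    by (simp add: field_simps)
  hence "pi * (- (1 / real n)) \<le> pi * ((4 * real (n div 4) + 2 - real n) / (2 * real n))"
    by (rule mult_left_mono) (use pi_gt_zero in linarith)
  hence d2: "- (pi / real n) \<le> \<delta>" unfolding de by simp
  have a1: "\<bar>\<delta>\<bar> \<le> pi / real n" using d1 d2 by linarith
  have a2: "pi / real n \<le> pi" using assms pi_gt_zero by (simp add: field_simps)
  have "cos (pi / real n) \<le> cos \<bar>\<delta>\<bar>" by (rule cos_monotone_0_pi_le[OF abs_ge_zero a1 a2])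
  also have "\<dots> = sin ((2 * real (n div 4) + 1) * (pi / real n))"
    unfolding cos_abs_real \<delta>_def by (simp add: sin_add cos_diff)
  finally show "cos (pi / real n) / sin (pi / real n) - 1 \<le> mu n 1" unfolding c using s
    by (simp add: divide_right_mono)
qed

lemma lam3_eq:
  assumes "4 \<le> n"
  shows "kth_largest_eigenvalue 3 (pi_adj_matrix n) = rev (sorted_list_of_multiset (mset (map (mu n) [0..<n]))) ! 2"
  unfolding kth_largest_eigenvalue_def eig[OF assms] by simp

lemma lam3_lower:
  assumes "4 \<le> n"
  shows "mu n 1 \<le> kth_largest_eigenvalue 3 (pi_adj_matrix n)"
  unfolding lam3_eq[OF assms]
  by (rule third_lower[of 0 n 1 "n - 1"]) (use assms mu_0_ge[of n] mu_sym[of n] in auto)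

lemma lam3_upper:
  assumes "4 \<le> n"
  shows "kth_largest_eigenvalue 3 (pi_adj_matrix n) \<le> max (mu n 1) (1 / sin (2 * pi / real n))"
  unfolding lam3_eq[OF assms]
proof (rule third_upper[where n=n and p=0 and q=1])
  fix i assume i: "i < n" "i \<noteq> 0" "i \<noteq> 1"
  show "mu n i \<le> max (mu n 1) (1 / sin (2 * pi / real n))"
  proof (cases "i = n - 1")
    case True thus ?thesis using mu_sym[of n] assms by simp
  next
    case False
    hence "mu n i \<le> 1 / sin (2 * pi / real n)" using i assms by (intro mu_mid) auto
    thus ?thesis by simp
  qed
qed (use assms in auto)

lemma max_div: "(0::real) < c \<Longrightarrow> max a b / c = max (a / c) (b / c)"
  by (simp add: max_def divide_le_cancel)

lemma lim1: "(\<lambda>n::nat. (cos (pi / real n) / sin (pi / real n) - 1) / real n) \<longlonglongrightarrow> inverse pi"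
  by real_asymp
lemma lim2: "(\<lambda>n::nat. (1 / sin (pi / real n) - 1) / real n) \<longlonglongrightarrow> inverse pi"
  by real_asymp
lemma lim3: "(\<lambda>n::nat. (1 / sin (2 * pi / real n)) / real n) \<longlonglongrightarrow> inverse pi / 2"
  by real_asymp

theorem theorem3p14:
  shows "(\<lambda>n. kth_largest_eigenvalue 3 (pi_adj_matrix n) / real n) \<longlonglongrightarrow> 1 / pi"
proof (rule real_tendsto_sandwich)
  show "\<forall>\<^sub>F n in sequentially. (cos (pi / real n) / sin (pi / real n) - 1) / real n \<le> kth_largest_eigenvalue 3 (pi_adj_matrix n) / real n"
    using eventually_ge_at_top[of 4]
  proof eventually_elim
    case (elim n)
    thus ?case using mu_1_bounds(1)[OF elim] lam3_lower[OF elim] by (intro divide_right_mono) auto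
  qed
  show "\<forall>\<^sub>F n in sequentially. kth_largest_eigenvalue 3 (pi_adj_matrix n) / real n \<le>
      max ((1 / sin (pi / real n) - 1) / real n) ((1 / sin (2 * pi / real n)) / real n)"
    using eventually_ge_at_top[of 4]
  proof eventually_elim
    case (elim n)
    have "kth_largest_eigenvalue 3 (pi_adj_matrix n) \<le> max (1 / sin (pi / real n) - 1) (1 / sin (2 * pi / real n))"
      using mu_1_bounds(2)[OF elim] lam3_upper[OF elim] by linarith
    hence "kth_largest_eigenvalue 3 (pi_adj_matrix n) / real n \<le> max (1 / sin (pi / real n) - 1) (1 / sin (2 * pi / real n)) / real n"
      by (intro divide_right_mono) auto
    also have "\<dots> = max ((1 / sin (pi / real n) - 1) / real n) ((1 / sin (2 * pi / real n)) / real n)"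
      using elim by (intro max_div) auto
    finally show ?case .
  qed
  show "(\<lambda>n. (cos (pi / real n) / sin (pi / real n) - 1) / real n) \<longlonglongrightarrow> 1 / pi"
    using lim1 by (simp add: inverse_eq_divide)
  have "(\<lambda>n. max ((1 / sin (pi / real n) - 1) / real n) ((1 / sin (2 * pi / real n)) / real n)) \<longlonglongrightarrow> max (inverse pi) (inverse pi / 2)"
    by (intro tendsto_max lim2 lim3)
  moreover have "max (inverse pi) (inverse pi / 2) = 1 / pi"
  proof -
    have "inverse pi / 2 \<le> inverse pi" using pi_gt_zero by simp
    thus ?thesis by (simp add: max_def inverse_eq_divide)
  qed
  ultimately show "(\<lambda>n. max ((1 / sin (pi / real n) - 1) / real n) ((1 / sin (2 * pi / real n)) / real n)) \<longlonglongrightarrow> 1 / pi"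
    by simp
qed

end
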